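(* Let $\varepsilon_{\mathrm{opt}}<\epsilon$ and $b'=b-\frac{\epsilon-\varepsilon_{\mathrm{opt}}}{2}$. Let $\bar\pi$ be a policy with $\hat V^{\bar\pi}_{r_p}(\rho)\ge\hat V^{\hat\pi^*}_{r_p}(\rho)-\varepsilon_{\mathrm{opt}}$ and $\hat V^{\bar\pi}_c(\rho)\ge b'-\varepsilon_{\mathrm{opt}}$ (e.g. the output $\bar\pi_T$ of the primal-dual algorithm under the conditions of its guarantee). Suppose $$|V^{\bar\pi}_c(\rho)-\hat V^{\bar\pi}_c(\rho)|\le\tfrac{\epsilon-\varepsilon_{\mathrm{opt}}}{2},\quad|V^{\pi^*}_c(\rho)-\hat V^{\pi^*}_c(\rho)|\le\tfrac{\epsilon-\varepsilon_{\mathrm{opt}}}{2},\quad|\hat V^{\pi^*_c}_c(\rho)-V^{\pi^*_c}_c(\rho)|\le\tfrac{\zeta}{4}.$$ Then (a) $V^{\bar\pi}_c(\rho)\ge b-\epsilon$, and (b) $$V^{\pi^*}_r(\rho)-V^{\bar\pi}_r(\rho)\le\frac{2\omega}{1-\gamma}+\varepsilon_{\mathrm{opt}}+|V^{\pi^*}_{r_p}(\rho)-\hat V^{\pi^*}_{r_p}(\rho)|+|\hat V^{\bar\pi}_{r_p}(\rho)-V^{\bar\pi}_{r_p}(\rho)|.$$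
   Context: A discounted CMDP $M=\langle\mathcal S,\mathcal A,\mathcal P,r,c,b,\rho,\gamma\rangle$ with finite state and action sets, reward $r:\mathcal S\times\mathcal A\to[0,1]$, constraint reward $c:\mathcal S\times\mathcal A\to[0,1]$, threshold $b$, initial distribution $\rho$, discount $\gamma\in[0,1)$. $V^\pi_g(\rho)$ is the discounted value of policy $\pi$ for reward $g$ under $\mathcal P$, $s_0\sim\rho$; hats denote values under an empirical kernel $\hat{\mathcal P}$. $r_p=r+\xi$ with $\xi(s,a)\in[0,\omega]$. $\pi^*$ is an optimal policy of $\max_\pi V^\pi_r(\rho)$ s.t. $V^\pi_c(\rho)\ge b$; $\hat\pi^*$ is an optimal policy of $\max_\pi\hat V^\pi_{r_p}(\rho)$ s.t. $\hat V^\pi_c(\rho)\ge b'$. Slater constant $\zeta=\max_\pi V^\pi_c(\rho)-b$; $\pi^*_c\in\arg\max_\pi V^\pi_c(\rho)$. *)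

theory Defs
  imports "HOL-Analysis.Analysis"
begin

definition is_dist :: "('x::finite \<Rightarrow> real) \<Rightarrow> bool" where
  "is_dist d \<longleftrightarrow> (\<forall>x. 0 \<le> d x) \<and> sum d UNIV = 1"

(* Stationary stochastic policies pi(a|s) = pi s a *)
definition is_policy :: "('s::finite \<Rightarrow> 'a::finite \<Rightarrow> real) \<Rightarrow> bool" where
  "is_policy \<pi> \<longleftrightarrow> (\<forall>s. is_dist (\<pi> s))"

(* Transition kernels P(s'|s,a) = P s a s' *)
definition is_kernel :: "('s::finite \<Rightarrow> 'a::finite \<Rightarrow> 's \<Rightarrow> real) \<Rightarrow> bool" where
  "is_kernel P \<longleftrightarrow> (\<forall>s a. is_dist (P s a))"

fun state_dist :: "('s::finite \<Rightarrow> 'a::finite \<Rightarrow> 's \<Rightarrow> real) \<Rightarrow> ('s \<Rightarrow> 'a \<Rightarrow> real)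
                   \<Rightarrow> ('s \<Rightarrow> real) \<Rightarrow> nat \<Rightarrow> 's \<Rightarrow> real" where
  "state_dist P \<pi> \<rho> 0 = \<rho>"
| "state_dist P \<pi> \<rho> (Suc t) =
     (\<lambda>s'. \<Sum>s\<in>UNIV. \<Sum>a\<in>UNIV. state_dist P \<pi> \<rho> t s * \<pi> s a * P s a s')"

definition val :: "('s::finite \<Rightarrow> 'a::finite \<Rightarrow> 's \<Rightarrow> real) \<Rightarrow> real \<Rightarrow> ('s \<Rightarrow> real)
                   \<Rightarrow> ('s \<Rightarrow> 'a \<Rightarrow> real) \<Rightarrow> ('s \<Rightarrow> 'a \<Rightarrow> real) \<Rightarrow> real" where
  "val P \<gamma> \<rho> \<pi> g =
     (\<Sum>t. \<gamma> ^ t * (\<Sum>s\<in>UNIV. \<Sum>a\<in>UNIV. state_dist P \<pi> \<rho> t s * \<pi> s a * g s a))"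

definition cmdp_optimal ::
  "('s::finite \<Rightarrow> 'a::finite \<Rightarrow> 's \<Rightarrow> real) \<Rightarrow> real \<Rightarrow> ('s \<Rightarrow> real)
   \<Rightarrow> ('s \<Rightarrow> 'a \<Rightarrow> real) \<Rightarrow> ('s \<Rightarrow> 'a \<Rightarrow> real) \<Rightarrow> real \<Rightarrow> ('s \<Rightarrow> 'a \<Rightarrow> real) \<Rightarrow> bool" where
  "cmdp_optimal P \<gamma> \<rho> r c b \<pi> \<longleftrightarrow>
     is_policy \<pi> \<and> val P \<gamma> \<rho> \<pi> c \<ge> b \<and>
     (\<forall>\<pi>'. is_policy \<pi>' \<and> val P \<gamma> \<rho> \<pi>' c \<ge> b \<longrightarrow> val P \<gamma> \<rho> \<pi>' r \<le> val P \<gamma> \<rho> \<pi> r)"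

definition mdp_optimal ::
  "('s::finite \<Rightarrow> 'a::finite \<Rightarrow> 's \<Rightarrow> real) \<Rightarrow> real \<Rightarrow> ('s \<Rightarrow> real)
   \<Rightarrow> ('s \<Rightarrow> 'a \<Rightarrow> real) \<Rightarrow> ('s \<Rightarrow> 'a \<Rightarrow> real) \<Rightarrow> bool" where
  "mdp_optimal P \<gamma> \<rho> g \<pi> \<longleftrightarrow>
     is_policy \<pi> \<and> (\<forall>\<pi>'. is_policy \<pi>' \<longrightarrow> val P \<gamma> \<rho> \<pi>' g \<le> val P \<gamma> \<rho> \<pi> g)"

end

theory Submission
  imports Defs
begin

lemma aux_ml: "0 \<le> (q::real) \<Longrightarrow> 0 \<le> x \<and> x \<le> M \<Longrightarrow> q * x \<le> M * q"
  by (metis mult.commute mult_left_mono)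

lemma sd_props:
  assumes "is_kernel P" "is_policy \<pi>" "is_dist \<rho>"
  shows "is_dist (state_dist P \<pi> \<rho> t)"
proof (induction t)
  case 0 then show ?case using assms by simp
next
  case (Suc t)
  let ?d = "state_dist P \<pi> \<rho> t"
  have nn: "\<forall>s'. 0 \<le> state_dist P \<pi> \<rho> (Suc t) s'"
    using Suc assms unfolding is_dist_def is_kernel_def is_policy_def
    by (auto intro!: sum_nonneg mult_nonneg_nonneg)
  have "sum (state_dist P \<pi> \<rho> (Suc t)) UNIV
      = (\<Sum>s\<in>UNIV. \<Sum>a\<in>UNIV. ?d s * \<pi> s a * (\<Sum>s'\<in>UNIV. P s a s'))"
  proof -
    have "sum (state_dist P \<pi> \<rho> (Suc t)) UNIV = (\<Sum>s'\<in>UNIV. \<Sum>s\<in>UNIV. \<Sum>a\<in>UNIV. ?d s * \<pi> s a * P s a s')"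
      by simp
    also have "\<dots> = (\<Sum>s\<in>UNIV. \<Sum>s'\<in>UNIV. \<Sum>a\<in>UNIV. ?d s * \<pi> s a * P s a s')"
      by (rule sum.swap)
    also have "\<dots> = (\<Sum>s\<in>UNIV. \<Sum>a\<in>UNIV. \<Sum>s'\<in>UNIV. ?d s * \<pi> s a * P s a s')"
      by (rule sum.cong[OF refl], rule sum.swap)
    finally show ?thesis by (simp add: sum_distrib_left)
  qed
  also have "\<dots> = (\<Sum>s\<in>UNIV. ?d s * (\<Sum>a\<in>UNIV. \<pi> s a))"
    using assms(1) unfolding is_kernel_def is_dist_def by (simp add: sum_distrib_left)
  also have "\<dots> = 1"
    using assms(2) Suc unfolding is_policy_def is_dist_def by simp
  finally show ?case using nn unfolding is_dist_def by simp
qed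

lemma inner_bounds:
  assumes "is_kernel P" "is_policy \<pi>" "is_dist \<rho>" "\<And>s a. 0 \<le> g s a \<and> g s a \<le> M"
  shows "0 \<le> (\<Sum>s\<in>UNIV. \<Sum>a\<in>UNIV. state_dist P \<pi> \<rho> t s * \<pi> s a * g s a)
       \<and> (\<Sum>s\<in>UNIV. \<Sum>a\<in>UNIV. state_dist P \<pi> \<rho> t s * \<pi> s a * g s a) \<le> M"
proof -
  let ?d = "state_dist P \<pi> \<rho> t"
  have d: "is_dist ?d" using sd_props assms by blast
  have "0 \<le> (\<Sum>s\<in>UNIV. \<Sum>a\<in>UNIV. ?d s * \<pi> s a * g s a)"
    using d assms unfolding is_dist_def is_policy_def
    by (auto intro!: sum_nonneg mult_nonneg_nonneg)
  moreover have "(\<Sum>s\<in>UNIV. \<Sum>a\<in>UNIV. ?d s * \<pi> s a * g s a)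
       \<le> (\<Sum>s\<in>UNIV. \<Sum>a\<in>UNIV. ?d s * \<pi> s a * M)"
    using d assms unfolding is_dist_def is_policy_def
    by (auto intro!: sum_mono mult_left_mono mult_nonneg_nonneg)
  moreover have "(\<Sum>s\<in>UNIV. \<Sum>a\<in>UNIV. ?d s * \<pi> s a * M) = M"
    using d assms(2) unfolding is_dist_def is_policy_def
    by (simp add: sum_distrib_right[symmetric] sum_distrib_left[symmetric] mult.assoc[symmetric])
  ultimately show ?thesis by linarith
qed

lemma val_summable:
  assumes "is_kernel P" "is_policy \<pi>" "is_dist \<rho>" "\<And>s a. 0 \<le> g s a \<and> g s a \<le> M"
    "0 \<le> \<gamma>" "\<gamma> < 1"
  shows "summable (\<lambda>t. \<gamma> ^ t * (\<Sum>s\<in>UNIV. \<Sum>a\<in>UNIV. state_dist P \<pi> \<rho> t s * \<pi> s a * g s a))"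
proof (rule summable_comparison_test[where g="\<lambda>t. M * \<gamma> ^ t"])
  show "\<exists>N. \<forall>n\<ge>N. norm (\<gamma> ^ n * (\<Sum>s\<in>UNIV. \<Sum>a\<in>UNIV. state_dist P \<pi> \<rho> n s * \<pi> s a * g s a)) \<le> M * \<gamma> ^ n"
  proof (intro exI[of _ 0] allI impI)
    fix n :: nat
    have ib: "0 \<le> (\<Sum>s\<in>UNIV. \<Sum>a\<in>UNIV. state_dist P \<pi> \<rho> n s * \<pi> s a * g s a)
       \<and> (\<Sum>s\<in>UNIV. \<Sum>a\<in>UNIV. state_dist P \<pi> \<rho> n s * \<pi> s a * g s a) \<le> M"
      by (rule inner_bounds[OF assms(1-4)])
    have "0 \<le> \<gamma> ^ n" using assms(5) by simp
    then show "norm (\<gamma> ^ n * (\<Sum>s\<in>UNIV. \<Sum>a\<in>UNIV. state_dist P \<pi> \<rho> n s * \<pi> s a * g s a)) \<le> M * \<gamma> ^ n"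
      using ib aux_ml[OF _ ib] by (simp add: abs_mult)
  qed
  show "summable (\<lambda>t. M * \<gamma> ^ t)" using assms(5,6) by (intro summable_mult summable_geometric) simp
qed

lemma val_add:
  assumes "is_kernel P" "is_policy \<pi>" "is_dist \<rho>" "\<And>s a. 0 \<le> g s a \<and> g s a \<le> M"
    "\<And>s a. 0 \<le> h s a \<and> h s a \<le> N" "0 \<le> \<gamma>" "\<gamma> < 1"
  shows "val P \<gamma> \<rho> \<pi> (\<lambda>s a. g s a + h s a) = val P \<gamma> \<rho> \<pi> g + val P \<gamma> \<rho> \<pi> h"
proof -
  note s1 = val_summable[OF assms(1-4) assms(6,7)]
  note s2 = val_summable[OF assms(1-3) assms(5) assms(6,7)]
  show ?thesis unfolding val_def
    by (subst suminf_add[OF s1 s2]) (simp add: algebra_simps sum.distrib)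
qed

lemma val_bounds:
  assumes "is_kernel P" "is_policy \<pi>" "is_dist \<rho>" "\<And>s a. 0 \<le> g s a \<and> g s a \<le> M"
    "0 \<le> \<gamma>" "\<gamma> < 1"
  shows "0 \<le> val P \<gamma> \<rho> \<pi> g \<and> val P \<gamma> \<rho> \<pi> g \<le> M / (1 - \<gamma>)"
proof
  note s = val_summable[OF assms]
  have ib: "\<And>t. 0 \<le> (\<Sum>s\<in>UNIV. \<Sum>a\<in>UNIV. state_dist P \<pi> \<rho> t s * \<pi> s a * g s a)
       \<and> (\<Sum>s\<in>UNIV. \<Sum>a\<in>UNIV. state_dist P \<pi> \<rho> t s * \<pi> s a * g s a) \<le> M"
    by (rule inner_bounds[OF assms(1-4)])
  show "0 \<le> val P \<gamma> \<rho> \<pi> g" unfolding val_def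
    using ib assms(5) by (intro suminf_nonneg[OF s]) simp
  have g: "(\<lambda>t. M * \<gamma> ^ t) sums (M * (1 / (1 - \<gamma>)))"
    using assms(5,6) by (intro sums_mult geometric_sums) simp
  have "val P \<gamma> \<rho> \<pi> g \<le> (\<Sum>t. M * \<gamma> ^ t)" unfolding val_def
    using ib assms(5) by (intro suminf_le[OF _ s sums_summable[OF g]] aux_ml) auto
  also have "\<dots> = M / (1 - \<gamma>)" using sums_unique[OF g] by simp
  finally show "val P \<gamma> \<rho> \<pi> g \<le> M / (1 - \<gamma>)" .
qed

theorem mainTheorem8:
  fixes P Phat :: "'s::finite \<Rightarrow> 'a::finite \<Rightarrow> 's \<Rightarrow> real"
    and r c \<xi> :: "'s \<Rightarrow> 'a \<Rightarrow> real"
    and \<rho> :: "'s \<Rightarrow> real"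
    and \<gamma> b b' \<omega> \<zeta> \<epsilon> \<epsilon>opt :: real
    and \<pi>star \<pi>hatstar \<pi>c \<pi>bar :: "'s \<Rightarrow> 'a \<Rightarrow> real"
  assumes kP: "is_kernel P" and kPhat: "is_kernel Phat"
    and rho: "is_dist \<rho>"
    and gam: "0 \<le> \<gamma>" "\<gamma> < 1"
    and r01: "\<And>s a. 0 \<le> r s a \<and> r s a \<le> 1"
    and c01: "\<And>s a. 0 \<le> c s a \<and> c s a \<le> 1"
    and xi: "\<And>s a. 0 \<le> \<xi> s a \<and> \<xi> s a \<le> \<omega>"
    and opt: "cmdp_optimal P \<gamma> \<rho> r c b \<pi>star"
    and eps: "\<epsilon>opt < \<epsilon>"
    and b': "b' = b - (\<epsilon> - \<epsilon>opt) / 2"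
    and opthat: "cmdp_optimal Phat \<gamma> \<rho> (\<lambda>s a. r s a + \<xi> s a) c b' \<pi>hatstar"
    and optc: "mdp_optimal P \<gamma> \<rho> c \<pi>c"
    and zeta: "\<zeta> = val P \<gamma> \<rho> \<pi>c c - b"
    and pbar: "is_policy \<pi>bar"
    and pbar_r: "val Phat \<gamma> \<rho> \<pi>bar (\<lambda>s a. r s a + \<xi> s a)
                   \<ge> val Phat \<gamma> \<rho> \<pi>hatstar (\<lambda>s a. r s a + \<xi> s a) - \<epsilon>opt"
    and pbar_c: "val Phat \<gamma> \<rho> \<pi>bar c \<ge> b' - \<epsilon>opt"
    and h1: "\<bar>val P \<gamma> \<rho> \<pi>bar c - val Phat \<gamma> \<rho> \<pi>bar c\<bar> \<le> (\<epsilon> - \<epsilon>opt) / 2"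
    and h2: "\<bar>val P \<gamma> \<rho> \<pi>star c - val Phat \<gamma> \<rho> \<pi>star c\<bar> \<le> (\<epsilon> - \<epsilon>opt) / 2"
    and h3: "\<bar>val Phat \<gamma> \<rho> \<pi>c c - val P \<gamma> \<rho> \<pi>c c\<bar> \<le> \<zeta> / 4"
  shows "val P \<gamma> \<rho> \<pi>bar c \<ge> b - \<epsilon>
       \<and> val P \<gamma> \<rho> \<pi>star r - val P \<gamma> \<rho> \<pi>bar r
           \<le> 2 * \<omega> / (1 - \<gamma>) + \<epsilon>opt
              + \<bar>val P \<gamma> \<rho> \<pi>star (\<lambda>s a. r s a + \<xi> s a) - val Phat \<gamma> \<rho> \<pi>star (\<lambda>s a. r s a + \<xi> s a)\<bar>
              + \<bar>val Phat \<gamma> \<rho> \<pi>bar (\<lambda>s a. r s a + \<xi> s a) - val P \<gamma> \<rho> \<pi>bar (\<lambda>s a. r s a + \<xi> s a)\<bar>"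
proof -
  have pstar: "is_policy \<pi>star" and cstar: "val P \<gamma> \<rho> \<pi>star c \<ge> b"
    using opt unfolding cmdp_optimal_def by auto
  have feas: "val Phat \<gamma> \<rho> \<pi>star c \<ge> b'" 
  proof -
    have "val P \<gamma> \<rho> \<pi>star c - val Phat \<gamma> \<rho> \<pi>star c \<le> (\<epsilon> - \<epsilon>opt) / 2"
      using h2 abs_ge_self order_trans by blast
    then show ?thesis using cstar b' by linarith
  qed
  have hatopt: "val Phat \<gamma> \<rho> \<pi>star (\<lambda>s a. r s a + \<xi> s a)
      \<le> val Phat \<gamma> \<rho> \<pi>hatstar (\<lambda>s a. r s a + \<xi> s a)"
    using opthat pstar feas unfolding cmdp_optimal_def by blast
  have add1: "val P \<gamma> \<rho> \<pi>star (\<lambda>s a. r s a + \<xi> s a) = val P \<gamma> \<rho> \<pi>star r + val P \<gamma> \<rho> \<pi>star \<xi>"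
    by (rule val_add[where g=r and M=1 and h=\<xi> and N=\<omega>, OF kP pstar rho r01 xi gam])
  have add2: "val P \<gamma> \<rho> \<pi>bar (\<lambda>s a. r s a + \<xi> s a) = val P \<gamma> \<rho> \<pi>bar r + val P \<gamma> \<rho> \<pi>bar \<xi>"
    by (rule val_add[where g=r and M=1 and h=\<xi> and N=\<omega>, OF kP pbar rho r01 xi gam])
  have x1: "0 \<le> val P \<gamma> \<rho> \<pi>star \<xi>" using val_bounds[where g=\<xi> and M=\<omega>, OF kP pstar rho xi gam] by blast
  have x2: "val P \<gamma> \<rho> \<pi>bar \<xi> \<le> \<omega> / (1 - \<gamma>)" using val_bounds[where g=\<xi> and M=\<omega>, OF kP pbar rho xi gam] by blast
  have om: "0 \<le> \<omega>" using xi[of undefined undefined] by linarith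
  have "0 \<le> \<omega> / (1 - \<gamma>)" using om gam by simp
  have a: "val P \<gamma> \<rho> \<pi>bar c \<ge> b - \<epsilon>" 
  proof -
    have "- (val P \<gamma> \<rho> \<pi>bar c - val Phat \<gamma> \<rho> \<pi>bar c) \<le> (\<epsilon> - \<epsilon>opt) / 2"
      using h1 abs_ge_minus_self order_trans by blast
    then show ?thesis using pbar_c b' by (simp add: field_simps)
  qed
  have "val P \<gamma> \<rho> \<pi>star (\<lambda>s a. r s a + \<xi> s a) - val Phat \<gamma> \<rho> \<pi>star (\<lambda>s a. r s a + \<xi> s a)
     \<le> \<bar>val P \<gamma> \<rho> \<pi>star (\<lambda>s a. r s a + \<xi> s a) - val Phat \<gamma> \<rho> \<pi>star (\<lambda>s a. r s a + \<xi> s a)\<bar>" by (rule abs_ge_self)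
  moreover have "val Phat \<gamma> \<rho> \<pi>bar (\<lambda>s a. r s a + \<xi> s a) - val P \<gamma> \<rho> \<pi>bar (\<lambda>s a. r s a + \<xi> s a)
     \<le> \<bar>val Phat \<gamma> \<rho> \<pi>bar (\<lambda>s a. r s a + \<xi> s a) - val P \<gamma> \<rho> \<pi>bar (\<lambda>s a. r s a + \<xi> s a)\<bar>" by (rule abs_ge_self)
  ultimately show ?thesis using a add1 add2 x1 x2 hatopt pbar_r \<open>0 \<le> \<omega> / (1 - \<gamma>)\<close> by linarith
qed

end
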